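(* Let $n\in\mathbb{N}$ and let $M\models \mathrm{I}\Delta_0$. Suppose $M$ admits a proper $\Sigma_{n+2}$-elementary end extension $K$ with $K\models \mathrm{B}\Sigma_{n+1}$. Then for every $a\in M$ and every $\Pi_{n+1}$-formula $\phi(x,y)$ with parameters from $M$, \[M\models \forall x\,\exists y<a\,\phi(x,y)\;\rightarrow\;\exists y<a\,\forall b\,\exists x>b\,\phi(x,y).\]
   Context: All theories contain $\mathrm{PA}^-$ (the theory of non-negative parts of discretely ordered rings). $\mathrm{I}\Delta_0$ is bounded induction; $\mathrm{B}\Sigma_{k}$ is the $\Sigma_k$-collection scheme $\forall x<a\,\exists y\,\phi(x,y)\to\exists b\,\forall x<a\,\exists y<b\,\phi(x,y)$ for $\Sigma_k$ formulas $\phi$ (with parameters), taken together with $\mathrm{I}\Delta_0$. An extension $M\subseteq K$ of models of first-order arithmetic is $\Sigma_k$-elementary if every $\Sigma_k$ formula with parameters from $M$ has the same truth value in $M$ and $K$; it is an end extension if every element of $K\setminus M$ is greater than every element of $M$; it is proper if $K\neq M$. *)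

theory Defs
  imports Main
begin

datatype trm = Var nat | Zero | One | Plus trm trm | Times trm trm

datatype fm =
    Eq trm trm
  | Lt trm trm
  | Neg fm
  | Conj fm fm
  | Disj fm fm
  | Ex nat fm
  | All nat fm

fun trm_vars :: "trm \<Rightarrow> nat set" where
  "trm_vars (Var i) = {i}"
| "trm_vars Zero = {}"
| "trm_vars One = {}"
| "trm_vars (Plus s t) = trm_vars s \<union> trm_vars t"
| "trm_vars (Times s t) = trm_vars s \<union> trm_vars t"

definition BEx :: "nat \<Rightarrow> trm \<Rightarrow> fm \<Rightarrow> fm" where
  "BEx x t \<phi> = Ex x (Conj (Lt (Var x) t) \<phi>)"
definition BAll :: "nat \<Rightarrow> trm \<Rightarrow> fm \<Rightarrow> fm" where
  "BAll x t \<phi> = All x (Disj (Neg (Lt (Var x) t)) \<phi>)"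

inductive delta0 :: "fm \<Rightarrow> bool" where
  "delta0 (Eq s t)"
| "delta0 (Lt s t)"
| "delta0 \<phi> \<Longrightarrow> delta0 (Neg \<phi>)"
| "delta0 \<phi> \<Longrightarrow> delta0 \<psi> \<Longrightarrow> delta0 (Conj \<phi> \<psi>)"
| "delta0 \<phi> \<Longrightarrow> delta0 \<psi> \<Longrightarrow> delta0 (Disj \<phi> \<psi>)"
| "x \<notin> trm_vars t \<Longrightarrow> delta0 \<phi> \<Longrightarrow> delta0 (BEx x t \<phi>)"
| "x \<notin> trm_vars t \<Longrightarrow> delta0 \<phi> \<Longrightarrow> delta0 (BAll x t \<phi>)"

inductive sigma :: "nat \<Rightarrow> fm \<Rightarrow> bool" and pi :: "nat \<Rightarrow> fm \<Rightarrow> bool" where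
  "delta0 \<phi> \<Longrightarrow> sigma 0 \<phi>"
| "delta0 \<phi> \<Longrightarrow> pi 0 \<phi>"
| "pi n \<phi> \<Longrightarrow> sigma (Suc n) \<phi>"
| "sigma (Suc n) \<phi> \<Longrightarrow> sigma (Suc n) (Ex x \<phi>)"
| "sigma n \<phi> \<Longrightarrow> pi (Suc n) \<phi>"
| "pi (Suc n) \<phi> \<Longrightarrow> pi (Suc n) (All x \<phi>)"

record 'a struc =
  dom :: "'a set"
  zer :: 'a
  one :: 'a
  pls :: "'a \<Rightarrow> 'a \<Rightarrow> 'a"
  tms :: "'a \<Rightarrow> 'a \<Rightarrow> 'a"
  lss :: "'a \<Rightarrow> 'a \<Rightarrow> bool"

fun eval :: "'a struc \<Rightarrow> (nat \<Rightarrow> 'a) \<Rightarrow> trm \<Rightarrow> 'a" where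
  "eval M e (Var i) = e i"
| "eval M e Zero = zer M"
| "eval M e One = one M"
| "eval M e (Plus s t) = pls M (eval M e s) (eval M e t)"
| "eval M e (Times s t) = tms M (eval M e s) (eval M e t)"

fun sat :: "'a struc \<Rightarrow> (nat \<Rightarrow> 'a) \<Rightarrow> fm \<Rightarrow> bool" where
  "sat M e (Eq s t) = (eval M e s = eval M e t)"
| "sat M e (Lt s t) = lss M (eval M e s) (eval M e t)"
| "sat M e (Neg \<phi>) = (\<not> sat M e \<phi>)"
| "sat M e (Conj \<phi> \<psi>) = (sat M e \<phi> \<and> sat M e \<psi>)"
| "sat M e (Disj \<phi> \<psi>) = (sat M e \<phi> \<or> sat M e \<psi>)"
| "sat M e (Ex x \<phi>) = (\<exists>a\<in>dom M. sat M (e(x := a)) \<phi>)"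
| "sat M e (All x \<phi>) = (\<forall>a\<in>dom M. sat M (e(x := a)) \<phi>)"

definition env :: "'a struc \<Rightarrow> (nat \<Rightarrow> 'a) \<Rightarrow> bool" where
  "env M e \<longleftrightarrow> (\<forall>i. e i \<in> dom M)"

text \<open>PA^-: non-negative parts of discretely ordered rings (axioms as in Kaye).\<close>
definition PAminus :: "'a struc \<Rightarrow> bool" where
  "PAminus M \<longleftrightarrow>
     zer M \<in> dom M \<and> one M \<in> dom M \<and>
     (\<forall>x\<in>dom M. \<forall>y\<in>dom M. pls M x y \<in> dom M \<and> tms M x y \<in> dom M) \<and>
     (\<forall>x\<in>dom M. \<forall>y\<in>dom M. \<forall>z\<in>dom M.
        pls M x y = pls M y x \<and>
        pls M (pls M x y) z = pls M x (pls M y z) \<and>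
        tms M x y = tms M y x \<and>
        tms M (tms M x y) z = tms M x (tms M y z) \<and>
        pls M x (zer M) = x \<and>
        tms M x (zer M) = zer M \<and>
        tms M x (one M) = x \<and>
        tms M x (pls M y z) = pls M (tms M x y) (tms M x z) \<and>
        \<not> lss M x x \<and>
        (lss M x y \<and> lss M y z \<longrightarrow> lss M x z) \<and>
        (lss M x y \<or> x = y \<or> lss M y x) \<and>
        (lss M x y \<longrightarrow> lss M (pls M x z) (pls M y z)) \<and>
        (lss M (zer M) z \<and> lss M x y \<longrightarrow> lss M (tms M x z) (tms M y z)) \<and>
        (lss M x y \<longrightarrow> (\<exists>w\<in>dom M. pls M x w = y)) \<and>
        (lss M (zer M) x \<longrightarrow> (one M = x \<or> lss M (one M) x)) \<and>
        (zer M = x \<or> lss M (zer M) x)) \<and>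
     lss M (zer M) (one M)"

definition IDelta0 :: "'a struc \<Rightarrow> bool" where
  "IDelta0 M \<longleftrightarrow> PAminus M \<and>
     (\<forall>\<phi> x e. delta0 \<phi> \<longrightarrow> env M e \<longrightarrow>
        sat M (e(x := zer M)) \<phi> \<longrightarrow>
        (\<forall>a\<in>dom M. sat M (e(x := a)) \<phi> \<longrightarrow> sat M (e(x := pls M a (one M))) \<phi>) \<longrightarrow>
        (\<forall>a\<in>dom M. sat M (e(x := a)) \<phi>))"

definition BSigma :: "nat \<Rightarrow> 'a struc \<Rightarrow> bool" where
  "BSigma k M \<longleftrightarrow> IDelta0 M \<and>
     (\<forall>\<phi> x y e. sigma k \<phi> \<longrightarrow> x \<noteq> y \<longrightarrow> env M e \<longrightarrow>
        (\<forall>a\<in>dom M.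
          (\<forall>u\<in>dom M. lss M u a \<longrightarrow> (\<exists>v\<in>dom M. sat M (e(x := u, y := v)) \<phi>)) \<longrightarrow>
          (\<exists>b\<in>dom M. \<forall>u\<in>dom M. lss M u a \<longrightarrow>
              (\<exists>v\<in>dom M. lss M v b \<and> sat M (e(x := u, y := v)) \<phi>))))"

definition substructure :: "'a struc \<Rightarrow> 'a struc \<Rightarrow> bool" where
  "substructure M K \<longleftrightarrow> dom M \<subseteq> dom K \<and> zer M = zer K \<and> one M = one K \<and>
     (\<forall>x\<in>dom M. \<forall>y\<in>dom M. pls M x y = pls K x y \<and> tms M x y = tms K x y
        \<and> (lss M x y \<longleftrightarrow> lss K x y))"

definition sigma_elementary :: "nat \<Rightarrow> 'a struc \<Rightarrow> 'a struc \<Rightarrow> bool" where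
  "sigma_elementary k M K \<longleftrightarrow> substructure M K \<and>
     (\<forall>\<phi> e. sigma k \<phi> \<longrightarrow> env M e \<longrightarrow> (sat M e \<phi> \<longleftrightarrow> sat K e \<phi>))"

definition end_extension :: "'a struc \<Rightarrow> 'a struc \<Rightarrow> bool" where
  "end_extension M K \<longleftrightarrow> substructure M K \<and>
     (\<forall>x\<in>dom K - dom M. \<forall>y\<in>dom M. lss K y x)"

definition proper_extension :: "'a struc \<Rightarrow> 'a struc \<Rightarrow> bool" where
  "proper_extension M K \<longleftrightarrow> substructure M K \<and> dom K \<noteq> dom M"

end

theory Submission
  imports Defs
begin

fun fv :: "fm \<Rightarrow> nat set" where
  "fv (Eq s t) = trm_vars s \<union> trm_vars t"
| "fv (Lt s t) = trm_vars s \<union> trm_vars t"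
| "fv (Neg \<phi>) = fv \<phi>"
| "fv (Conj \<phi> \<psi>) = fv \<phi> \<union> fv \<psi>"
| "fv (Disj \<phi> \<psi>) = fv \<phi> \<union> fv \<psi>"
| "fv (Ex x \<phi>) = fv \<phi> - {x}"
| "fv (All x \<phi>) = fv \<phi> - {x}"

lemma finite_trm_vars: "finite (trm_vars t)" by (induction t) auto
lemma finite_fv: "finite (fv \<phi>)" by (induction \<phi>) (auto simp: finite_trm_vars)

lemma eval_coinc: "(\<forall>i\<in>trm_vars t. e i = e' i) \<Longrightarrow> eval M e t = eval M e' t"
  by (induction t) auto

lemma sat_coinc: "(\<forall>i\<in>fv \<phi>. e i = e' i) \<Longrightarrow> sat M e \<phi> = sat M e' \<phi>"
proof (induction \<phi> arbitrary: e e')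
  case (Ex x \<phi>)
  have "\<And>a. sat M (e(x:=a)) \<phi> = sat M (e'(x:=a)) \<phi>"
    by (rule Ex.IH) (use Ex.prems in auto)
  then show ?case by simp
next
  case (All x \<phi>)
  have "\<And>a. sat M (e(x:=a)) \<phi> = sat M (e'(x:=a)) \<phi>"
    by (rule All.IH) (use All.prems in auto)
  then show ?case by simp
next
  case (Eq s t) then show ?case using eval_coinc[of s e e' M] eval_coinc[of t e e' M] by auto
next
  case (Lt s t) then show ?case using eval_coinc[of s e e' M] eval_coinc[of t e e' M] by auto
next
  case (Neg \<phi>) then show ?case by simp
next
  case (Conj a b)
  then have "sat M e a = sat M e' a" "sat M e b = sat M e' b" by auto
  then show ?case by simp
next
  case (Disj a b)
  then have "sat M e a = sat M e' a" "sat M e b = sat M e' b" by auto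
  then show ?case by simp
qed

lemma delta0_sp: "delta0 \<phi> \<Longrightarrow> sigma k \<phi> \<and> pi k \<phi>"
  by (induction k) (auto intro: sigma_pi.intros)

lemma sp_step: "(sigma k \<phi> \<longrightarrow> sigma (Suc k) \<phi>) \<and> (pi k' \<psi> \<longrightarrow> pi (Suc k') \<psi>)"
proof (rule sigma_pi.induct[of "\<lambda>k \<phi>. sigma (Suc k) \<phi>" "\<lambda>k \<phi>. pi (Suc k) \<phi>"])
qed (auto intro: sigma_pi.intros)

lemma sigma_mono: "sigma j \<phi> \<Longrightarrow> j \<le> k \<Longrightarrow> sigma k \<phi>"
proof (induction k)
  case 0 then show ?case by simp
next
  case (Suc k) then show ?case using sp_step by (cases "j = Suc k") auto
qed

lemma pi_mono: "pi j \<phi> \<Longrightarrow> j \<le> k \<Longrightarrow> pi k \<phi>"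
proof (induction k)
  case 0 then show ?case by simp
next
  case (Suc k) then show ?case using sp_step by (cases "j = Suc k") auto
qed

fun fdual :: "fm \<Rightarrow> fm" where
  "fdual (Eq s t) = Neg (Eq s t)"
| "fdual (Lt s t) = Neg (Lt s t)"
| "fdual (Neg \<phi>) = \<phi>"
| "fdual (Conj \<phi> \<psi>) = Disj (fdual \<phi>) (fdual \<psi>)"
| "fdual (Disj \<phi> \<psi>) = Conj (fdual \<phi>) (fdual \<psi>)"
| "fdual (Ex x \<phi>) = All x (fdual \<phi>)"
| "fdual (All x \<phi>) = Ex x (fdual \<phi>)"

lemma sat_fdual: "sat M e (fdual \<phi>) = (\<not> sat M e \<phi>)"
  by (induction \<phi> arbitrary: e) auto

lemma fv_fdual: "fv (fdual \<phi>) = fv \<phi>"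
  by (induction \<phi>) auto

lemma fdual_BEx: "fdual (BEx x t \<phi>) = BAll x t (fdual \<phi>)"
  by (simp add: BEx_def BAll_def)
lemma fdual_BAll: "fdual (BAll x t \<phi>) = BEx x t (fdual \<phi>)"
  by (simp add: BEx_def BAll_def)

lemma delta0_fdual: "delta0 \<phi> \<Longrightarrow> delta0 (fdual \<phi>)"
  by (induction rule: delta0.induct) (auto intro: delta0.intros simp: fdual_BEx fdual_BAll)

lemma sp_fdual: "(sigma k \<phi> \<longrightarrow> pi k (fdual \<phi>)) \<and> (pi k' \<psi> \<longrightarrow> sigma k' (fdual \<psi>))"
proof (rule sigma_pi.induct[of "\<lambda>k \<phi>. pi k (fdual \<phi>)" "\<lambda>k \<phi>. sigma k (fdual \<phi>)"])
qed (auto intro: sigma_pi.intros delta0_fdual)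

lemma sigma_fdual: "sigma k \<phi> \<Longrightarrow> pi k (fdual \<phi>)" using sp_fdual by blast
lemma pi_fdual: "pi k \<phi> \<Longrightarrow> sigma k (fdual \<phi>)" using sp_fdual by blast

fun rt :: "(nat \<Rightarrow> nat) \<Rightarrow> trm \<Rightarrow> trm" where
  "rt f (Var i) = Var (f i)"
| "rt f Zero = Zero"
| "rt f One = One"
| "rt f (Plus s t) = Plus (rt f s) (rt f t)"
| "rt f (Times s t) = Times (rt f s) (rt f t)"

fun rn :: "(nat \<Rightarrow> nat) \<Rightarrow> fm \<Rightarrow> fm" where
  "rn f (Eq s t) = Eq (rt f s) (rt f t)"
| "rn f (Lt s t) = Lt (rt f s) (rt f t)"
| "rn f (Neg \<phi>) = Neg (rn f \<phi>)"
| "rn f (Conj \<phi> \<psi>) = Conj (rn f \<phi>) (rn f \<psi>)"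
| "rn f (Disj \<phi> \<psi>) = Disj (rn f \<phi>) (rn f \<psi>)"
| "rn f (Ex x \<phi>) = Ex (f x) (rn f \<phi>)"
| "rn f (All x \<phi>) = All (f x) (rn f \<phi>)"

lemma eval_rt: "eval M e (rt f t) = eval M (e \<circ> f) t"
  by (induction t) auto

lemma trm_vars_rt: "trm_vars (rt f t) = f ` trm_vars t"
  by (induction t) auto

lemma upd_comp_inj: "inj f \<Longrightarrow> (e(f x := a)) \<circ> f = (e \<circ> f)(x := a)"
  by (auto simp: fun_eq_iff inj_eq)

lemma sat_rn: "inj f \<Longrightarrow> sat M e (rn f \<phi>) = sat M (e \<circ> f) \<phi>"
  by (induction \<phi> arbitrary: e) (auto simp: eval_rt upd_comp_inj)

lemma fv_rn: "inj f \<Longrightarrow> fv (rn f \<phi>) = f ` fv \<phi>"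
  by (induction \<phi>) (auto simp: trm_vars_rt inj_eq)

lemma rn_BEx: "rn f (BEx x t \<phi>) = BEx (f x) (rt f t) (rn f \<phi>)"
  by (simp add: BEx_def)
lemma rn_BAll: "rn f (BAll x t \<phi>) = BAll (f x) (rt f t) (rn f \<phi>)"
  by (simp add: BAll_def)

lemma delta0_rn: "delta0 \<phi> \<Longrightarrow> inj f \<Longrightarrow> delta0 (rn f \<phi>)"
proof (induction rule: delta0.induct)
  case (6 x t \<phi>)
  then have "f x \<notin> trm_vars (rt f t)" by (auto simp: trm_vars_rt inj_eq)
  then show ?case using 6 by (auto simp: rn_BEx intro: delta0.intros)
next
  case (7 x t \<phi>)
  then have "f x \<notin> trm_vars (rt f t)" by (auto simp: trm_vars_rt inj_eq)
  then show ?case using 7 by (auto simp: rn_BAll intro: delta0.intros)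
qed (auto intro: delta0.intros)

lemma sp_rn: "inj f \<Longrightarrow> (sigma k \<phi> \<longrightarrow> sigma k (rn f \<phi>)) \<and> (pi k' \<psi> \<longrightarrow> pi k' (rn f \<psi>))"
proof (rule sigma_pi.induct[of "\<lambda>k \<phi>. sigma k (rn f \<phi>)" "\<lambda>k \<phi>. pi k (rn f \<phi>)"])
qed (auto intro: sigma_pi.intros delta0_rn)

fun exs :: "nat list \<Rightarrow> fm \<Rightarrow> fm" where
  "exs [] \<alpha> = \<alpha>"
| "exs (y # ys) \<alpha> = Ex y (exs ys \<alpha>)"

lemma rn_exs: "rn f (exs ys \<alpha>) = exs (map f ys) (rn f \<alpha>)"
  by (induction ys) auto

lemma exs_append: "exs (xs @ ys) \<alpha> = exs xs (exs ys \<alpha>)"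
  by (induction xs) auto

lemma fv_exs: "fv (exs ys \<alpha>) = fv \<alpha> - set ys"
  by (induction ys) auto

lemma sigma_exs: "pi m \<alpha> \<Longrightarrow> sigma (Suc m) (exs ys \<alpha>)"
  by (induction ys) (auto intro: sigma_pi.intros)

lemma sigma_Suc_inv: "sigma (Suc m) \<phi> \<Longrightarrow> pi m \<phi> \<or> (\<exists>x \<psi>. \<phi> = Ex x \<psi> \<and> sigma (Suc m) \<psi>)"
  by (cases rule: sigma.cases) auto

lemma sigma_decomp: "sigma (Suc m) \<phi> \<Longrightarrow> \<exists>ys \<alpha>. pi m \<alpha> \<and> \<phi> = exs ys \<alpha>"
proof (induction \<phi>)
  case (Ex x \<phi>)
  from Ex.prems show ?case
  proof (cases rule: sigma.cases)
    case 2 then show ?thesis by (metis exs.simps(1))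
  next
    case 3
    then obtain ys \<alpha> where "pi m \<alpha>" "\<phi> = exs ys \<alpha>" using Ex.IH by auto
    then show ?thesis using 3 by (metis exs.simps(2))
  qed
qed (drule sigma_Suc_inv, force intro: exI[of _ "[]"])+

lemma fresh_map: fixes F G :: "nat set" assumes "finite F" "finite G"
  shows "\<exists>f. inj f \<and> (\<forall>i\<in>F. f i = i) \<and> (\<forall>i. i \<notin> F \<longrightarrow> f i \<notin> G)"
proof -
  define N where "N = Suc (Max (insert 0 (F \<union> G)))"
  have big: "\<And>i. i \<in> F \<union> G \<Longrightarrow> i < N"
    using assms by (simp add: N_def le_imp_less_Suc)
  define f where "f i = (if i \<in> F then i else i + N)" for i
  have "inj f"
  proof (rule injI)
    fix i j assume "f i = f j"
    then show "i = j" using big[of i] big[of j] by (auto simp: f_def split: if_splits)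
  qed
  moreover have "\<forall>i. i \<notin> F \<longrightarrow> f i \<notin> G" using big by (force simp: f_def)
  ultimately show ?thesis by (auto simp: f_def)
qed

lemma rename_away:
  assumes "finite G"
  shows "\<exists>f. inj f \<and> (\<forall>M e. sat M e (rn f \<phi>) = sat M e \<phi>) \<and> fv (rn f \<phi>) = fv \<phi>
            \<and> (\<forall>i. i \<notin> fv \<phi> \<longrightarrow> f i \<notin> G)"
proof -
  obtain f where f: "inj f" "\<forall>i\<in>fv \<phi>. f i = i" "\<forall>i. i \<notin> fv \<phi> \<longrightarrow> f i \<notin> G"
    using fresh_map[OF finite_fv assms] by blast
  have "\<forall>M e. sat M e (rn f \<phi>) = sat M e \<phi>"
    using f by (auto simp: sat_rn intro!: sat_coinc)
  moreover have "fv (rn f \<phi>) = fv \<phi>" using f by (force simp: fv_rn)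
  ultimately show ?thesis using f by blast
qed

lemma set_exs_fv: "set ys \<inter> fv (exs ys \<alpha>) = {}"
  by (auto simp: fv_exs)

lemma pull_conj_l: "set xs \<inter> fv \<beta> = {} \<Longrightarrow>
   sat M e (Conj (exs xs \<alpha>) \<beta>) = sat M e (exs xs (Conj \<alpha> \<beta>))"
proof (induction xs arbitrary: e)
  case (Cons x xs)
  have "\<And>a. sat M (e(x:=a)) \<beta> = sat M e \<beta>" using Cons.prems by (intro sat_coinc) auto
  then show ?case using Cons by auto
qed simp

lemma pull_conj_r: "set xs \<inter> fv \<beta> = {} \<Longrightarrow>
   sat M e (Conj \<beta> (exs xs \<alpha>)) = sat M e (exs xs (Conj \<beta> \<alpha>))"
proof (induction xs arbitrary: e)
  case (Cons x xs)
  have "\<And>a. sat M (e(x:=a)) \<beta> = sat M e \<beta>" using Cons.prems by (intro sat_coinc) auto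
  then show ?case using Cons by auto
qed simp

lemma pull_disj_l: "set xs \<inter> fv \<beta> = {} \<Longrightarrow> dom M \<noteq> {} \<Longrightarrow>
   sat M e (Disj (exs xs \<alpha>) \<beta>) = sat M e (exs xs (Disj \<alpha> \<beta>))"
proof (induction xs arbitrary: e)
  case (Cons x xs)
  have "\<And>a. sat M (e(x:=a)) \<beta> = sat M e \<beta>" using Cons.prems by (intro sat_coinc) auto
  then show ?case using Cons by auto
qed simp

lemma pull_disj_r: "set xs \<inter> fv \<beta> = {} \<Longrightarrow> dom M \<noteq> {} \<Longrightarrow>
   sat M e (Disj \<beta> (exs xs \<alpha>)) = sat M e (exs xs (Disj \<beta> \<alpha>))"
proof (induction xs arbitrary: e)
  case (Cons x xs)
  have "\<And>a. sat M (e(x:=a)) \<beta> = sat M e \<beta>" using Cons.prems by (intro sat_coinc) auto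
  then show ?case using Cons by auto
qed simp

definition eqK :: "'a struc \<Rightarrow> fm \<Rightarrow> fm \<Rightarrow> bool" where
  "eqK K \<phi> \<psi> \<longleftrightarrow> (\<forall>e. env K e \<longrightarrow> sat K e \<phi> = sat K e \<psi>)"

lemma env_upd: "env K e \<Longrightarrow> a \<in> dom K \<Longrightarrow> env K (e(x := a))"
  by (simp add: env_def)

lemma eqK_refl: "eqK K \<phi> \<phi>" by (simp add: eqK_def)
lemma eqK_sym: "eqK K \<phi> \<psi> \<Longrightarrow> eqK K \<psi> \<phi>" by (simp add: eqK_def)
lemma eqK_trans: "eqK K \<phi> \<psi> \<Longrightarrow> eqK K \<psi> \<chi> \<Longrightarrow> eqK K \<phi> \<chi>" by (simp add: eqK_def)
lemma eqK_Conj: "eqK K a a' \<Longrightarrow> eqK K b b' \<Longrightarrow> eqK K (Conj a b) (Conj a' b')" by (simp add: eqK_def)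
lemma eqK_Disj: "eqK K a a' \<Longrightarrow> eqK K b b' \<Longrightarrow> eqK K (Disj a b) (Disj a' b')" by (simp add: eqK_def)
lemma eqK_Neg: "eqK K a a' \<Longrightarrow> eqK K (Neg a) (Neg a')" by (simp add: eqK_def)
lemma eqK_Ex: "eqK K a a' \<Longrightarrow> eqK K (Ex x a) (Ex x a')" by (auto simp: eqK_def env_upd)
lemma eqK_All: "eqK K a a' \<Longrightarrow> eqK K (All x a) (All x a')" by (auto simp: eqK_def env_upd)
lemma eqK_BAll: "eqK K a a' \<Longrightarrow> eqK K (BAll x t a) (BAll x t a')"
  unfolding BAll_def by (intro eqK_All eqK_Disj eqK_refl)
lemma eqK_exs: "eqK K a a' \<Longrightarrow> eqK K (exs ys a) (exs ys a')"
  by (induction ys) (auto intro: eqK_Ex)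
lemma eqK_fdual: "eqK K a a' \<Longrightarrow> eqK K (fdual a) (fdual a')" by (simp add: eqK_def sat_fdual)
lemma eqK_univ: "(\<And>e. sat K e a = sat K e b) \<Longrightarrow> eqK K a b" by (simp add: eqK_def)

inductive bS :: "nat \<Rightarrow> fm \<Rightarrow> bool" where
  bS_base: "sigma m \<phi> \<Longrightarrow> bS m \<phi>"
| bS_conj: "bS m \<phi> \<Longrightarrow> bS m \<psi> \<Longrightarrow> bS m (Conj \<phi> \<psi>)"
| bS_disj: "bS m \<phi> \<Longrightarrow> bS m \<psi> \<Longrightarrow> bS m (Disj \<phi> \<psi>)"
| bS_ex: "bS (Suc m) \<phi> \<Longrightarrow> bS (Suc m) (Ex x \<phi>)"
| bS_bex: "bS m \<phi> \<Longrightarrow> x \<noteq> v \<Longrightarrow> bS m (BEx x (Var v) \<phi>)"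
| bS_ball: "bS m \<phi> \<Longrightarrow> x \<noteq> v \<Longrightarrow> bS m (BAll x (Var v) \<phi>)"

lemma bS0: "bS k \<phi> \<Longrightarrow> k = 0 \<Longrightarrow> delta0 \<phi>"
  by (induction rule: bS.induct) (auto intro: delta0.intros elim: sigma.cases)

fun bexs :: "nat list \<Rightarrow> nat \<Rightarrow> fm \<Rightarrow> fm" where
  "bexs [] w \<alpha> = \<alpha>"
| "bexs (y # ys) w \<alpha> = BEx y (Var w) (bexs ys w \<alpha>)"

fun balls :: "nat list \<Rightarrow> nat \<Rightarrow> fm \<Rightarrow> fm" where
  "balls [] w \<alpha> = \<alpha>"
| "balls (y # ys) w \<alpha> = BAll y (Var w) (balls ys w \<alpha>)"

lemma fdual_bexs: "fdual (bexs ys w \<alpha>) = balls ys w (fdual \<alpha>)"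
  by (induction ys) (auto simp: fdual_BEx)

lemma bS_balls: "bS m \<alpha> \<Longrightarrow> w \<notin> set ys \<Longrightarrow> bS m (balls ys w \<alpha>)"
  by (induction ys) (auto intro: bS_ball)

definition PA3 :: "'a struc \<Rightarrow> 'a \<Rightarrow> 'a \<Rightarrow> 'a \<Rightarrow> bool" where
  "PA3 M x y z \<longleftrightarrow>
        pls M x y = pls M y x \<and>
        pls M (pls M x y) z = pls M x (pls M y z) \<and>
        tms M x y = tms M y x \<and>
        tms M (tms M x y) z = tms M x (tms M y z) \<and>
        pls M x (zer M) = x \<and>
        tms M x (zer M) = zer M \<and>
        tms M x (one M) = x \<and>
        tms M x (pls M y z) = pls M (tms M x y) (tms M x z) \<and>
        \<not> lss M x x \<and>
        (lss M x y \<and> lss M y z \<longrightarrow> lss M x z) \<and>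
        (lss M x y \<or> x = y \<or> lss M y x) \<and>
        (lss M x y \<longrightarrow> lss M (pls M x z) (pls M y z)) \<and>
        (lss M (zer M) z \<and> lss M x y \<longrightarrow> lss M (tms M x z) (tms M y z)) \<and>
        (lss M x y \<longrightarrow> (\<exists>w\<in>dom M. pls M x w = y)) \<and>
        (lss M (zer M) x \<longrightarrow> (one M = x \<or> lss M (one M) x)) \<and>
        (zer M = x \<or> lss M (zer M) x)"

lemma PA_unf: "PAminus M \<longleftrightarrow> zer M \<in> dom M \<and> one M \<in> dom M \<and>
     (\<forall>x\<in>dom M. \<forall>y\<in>dom M. pls M x y \<in> dom M \<and> tms M x y \<in> dom M) \<and>
     (\<forall>x\<in>dom M. \<forall>y\<in>dom M. \<forall>z\<in>dom M. PA3 M x y z) \<and> lss M (zer M) (one M)"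
  unfolding PAminus_def PA3_def by (rule refl)

lemma pa3: "PAminus K \<Longrightarrow> x \<in> dom K \<Longrightarrow> y \<in> dom K \<Longrightarrow> z \<in> dom K \<Longrightarrow> PA3 K x y z"
  unfolding PA_unf by blast

lemma pa_basic:
  assumes "PAminus K"
  shows "zer K \<in> dom K" "one K \<in> dom K"
    "\<And>x y. x \<in> dom K \<Longrightarrow> y \<in> dom K \<Longrightarrow> pls K x y \<in> dom K"
    "\<And>x. x \<in> dom K \<Longrightarrow> \<not> lss K x x"
    "\<And>x y z. x \<in> dom K \<Longrightarrow> y \<in> dom K \<Longrightarrow> z \<in> dom K \<Longrightarrow> lss K x y \<Longrightarrow> lss K y z \<Longrightarrow> lss K x z"
    "\<And>x y. x \<in> dom K \<Longrightarrow> y \<in> dom K \<Longrightarrow> pls K x y = pls K y x"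
    "\<And>x. x \<in> dom K \<Longrightarrow> pls K x (zer K) = x"
    "\<And>x y z. x \<in> dom K \<Longrightarrow> y \<in> dom K \<Longrightarrow> z \<in> dom K \<Longrightarrow> lss K x y \<Longrightarrow> lss K (pls K x z) (pls K y z)"
    "\<And>x. x \<in> dom K \<Longrightarrow> zer K = x \<or> lss K (zer K) x"
    "lss K (zer K) (one K)"
proof -
  show "zer K \<in> dom K" "one K \<in> dom K" "lss K (zer K) (one K)" using assms unfolding PA_unf by blast+
  show "\<And>x y. x \<in> dom K \<Longrightarrow> y \<in> dom K \<Longrightarrow> pls K x y \<in> dom K" using assms unfolding PA_unf by blast
  show "\<And>x. x \<in> dom K \<Longrightarrow> \<not> lss K x x" using pa3[OF assms] unfolding PA3_def by blast
  show "\<And>x y z. x \<in> dom K \<Longrightarrow> y \<in> dom K \<Longrightarrow> z \<in> dom K \<Longrightarrow> lss K x y \<Longrightarrow> lss K y z \<Longrightarrow> lss K x z"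
    using pa3[OF assms] unfolding PA3_def by blast
  show "\<And>x y. x \<in> dom K \<Longrightarrow> y \<in> dom K \<Longrightarrow> pls K x y = pls K y x"
    using pa3[OF assms] unfolding PA3_def by blast
  show "\<And>x. x \<in> dom K \<Longrightarrow> pls K x (zer K) = x" using pa3[OF assms] unfolding PA3_def by blast
  show "\<And>x y z. x \<in> dom K \<Longrightarrow> y \<in> dom K \<Longrightarrow> z \<in> dom K \<Longrightarrow> lss K x y \<Longrightarrow> lss K (pls K x z) (pls K y z)"
    using pa3[OF assms] unfolding PA3_def by blast
  show "\<And>x. x \<in> dom K \<Longrightarrow> zer K = x \<or> lss K (zer K) x" using pa3[OF assms] unfolding PA3_def by blast
qed

lemma pa_succ: assumes "PAminus K" "x \<in> dom K" shows "lss K x (pls K x (one K))"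
proof -
  note P = pa_basic[OF assms(1)]
  have "lss K (pls K (zer K) x) (pls K (one K) x)" using P(8)[OF P(1) P(2) assms(2) P(10)] .
  moreover have "pls K (zer K) x = x" using P(6)[OF P(1) assms(2)] P(7)[OF assms(2)] by simp
  moreover have "pls K (one K) x = pls K x (one K)" using P(6)[OF P(2) assms(2)] .
  ultimately show ?thesis by simp
qed

lemma pa_le_add: assumes "PAminus K" "x \<in> dom K" "y \<in> dom K"
  shows "lss K x (pls K (pls K x y) (one K))"
proof -
  note P = pa_basic[OF assms(1)]
  have xy: "pls K x y \<in> dom K" using P(3) assms by blast
  have s: "lss K (pls K x y) (pls K (pls K x y) (one K))" using pa_succ[OF assms(1) xy] .
  show ?thesis
  proof (cases "y = zer K")
    case True then show ?thesis using s P(7)[OF assms(2)] by simp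
  next
    case False
    then have "lss K (zer K) y" using P(9)[OF assms(3)] by blast
    then have "lss K (pls K (zer K) x) (pls K y x)" using P(8)[OF P(1) assms(3) assms(2)] by blast
    moreover have "pls K (zer K) x = x" using P(6)[OF P(1) assms(2)] P(7)[OF assms(2)] by simp
    moreover have "pls K y x = pls K x y" using P(6)[OF assms(3) assms(2)] .
    ultimately have "lss K x (pls K x y)" by simp
    then show ?thesis using s P(5)[OF assms(2) xy P(3)[OF xy P(2)]] by blast
  qed
qed

lemma pa_le_add2: assumes "PAminus K" "x \<in> dom K" "y \<in> dom K"
  shows "lss K y (pls K (pls K x y) (one K))"
  using pa_le_add[OF assms(1,3,2)] pa_basic(6)[OF assms(1) assms(2,3)] by simp

lemma sat_upd_irrel: "x \<notin> fv \<phi> \<Longrightarrow> sat M (e(x:=a)) \<phi> = sat M e \<phi>"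
  by (rule sat_coinc) auto

lemma sat_BEx: "sat M e (BEx y t \<psi>) = (\<exists>a\<in>dom M. lss M a (eval M (e(y:=a)) t) \<and> sat M (e(y:=a)) \<psi>)"
  by (simp add: BEx_def)
lemma sat_BAll: "sat M e (BAll y t \<psi>) = (\<forall>a\<in>dom M. lss M a (eval M (e(y:=a)) t) \<longrightarrow> sat M (e(y:=a)) \<psi>)"
  by (auto simp: BAll_def)

lemma sat_bexs_Cons: "y \<noteq> wv \<Longrightarrow> sat M (e(wv:=w)) (bexs (y#ys) wv \<alpha>) =
   (\<exists>a\<in>dom M. lss M a w \<and> sat M ((e(y:=a))(wv:=w)) (bexs ys wv \<alpha>))"
  by (simp add: sat_BEx fun_upd_twist)

lemma bexs_mono:
  assumes "PAminus K" "w \<in> dom K" "w' \<in> dom K" "lss K w w'"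
  shows "wv \<notin> set ys \<Longrightarrow> wv \<notin> fv \<alpha> \<Longrightarrow> sat K (e(wv:=w)) (bexs ys wv \<alpha>) \<Longrightarrow> sat K (e(wv:=w')) (bexs ys wv \<alpha>)"
proof (induction ys arbitrary: e)
  case Nil
  show ?case using Nil.prems(3) by (simp only: bexs.simps sat_upd_irrel[OF Nil.prems(2)])
next
  case (Cons y ys)
  have yw: "y \<noteq> wv" and ys: "wv \<notin> set ys" using Cons.prems(1) by auto
  have "\<exists>a\<in>dom K. lss K a w \<and> sat K ((e(y:=a))(wv:=w)) (bexs ys wv \<alpha>)"
    using Cons.prems(3) unfolding sat_bexs_Cons[OF yw] .
  then obtain a where a: "a \<in> dom K" "lss K a w" "sat K ((e(y:=a))(wv:=w)) (bexs ys wv \<alpha>)"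
    by blast
  have "sat K ((e(y:=a))(wv:=w')) (bexs ys wv \<alpha>)" using Cons.IH[OF ys Cons.prems(2) a(3)] .
  moreover have "lss K a w'" using pa_basic(5)[OF assms(1) a(1) assms(2,3) a(2) assms(4)] .
  ultimately show ?case unfolding sat_bexs_Cons[OF yw] using a(1) by blast
qed

lemma bexs_exs:
  shows "wv \<notin> set ys \<Longrightarrow> wv \<notin> fv \<alpha> \<Longrightarrow> sat M (e(wv:=w)) (bexs ys wv \<alpha>) \<Longrightarrow> sat M e (exs ys \<alpha>)"
proof (induction ys arbitrary: e)
  case Nil
  show ?case using Nil.prems(3) by (simp only: bexs.simps exs.simps sat_upd_irrel[OF Nil.prems(2)])
next
  case (Cons y ys)
  have yw: "y \<noteq> wv" and ys: "wv \<notin> set ys" using Cons.prems(1) by auto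
  have "\<exists>a\<in>dom M. lss M a w \<and> sat M ((e(y:=a))(wv:=w)) (bexs ys wv \<alpha>)"
    using Cons.prems(3) unfolding sat_bexs_Cons[OF yw] .
  then obtain a where a: "a \<in> dom M" "sat M ((e(y:=a))(wv:=w)) (bexs ys wv \<alpha>)"
    by blast
  have "sat M (e(y:=a)) (exs ys \<alpha>)" using Cons.IH[OF ys Cons.prems(2) a(2)] .
  then show ?case using a(1) by (simp only: exs.simps sat.simps) blast
qed

lemma exs_bexs:
  assumes "PAminus K"
  shows "wv \<notin> set ys \<Longrightarrow> wv \<notin> fv \<alpha> \<Longrightarrow> env K e \<Longrightarrow> sat K e (exs ys \<alpha>) \<Longrightarrow> \<exists>w\<in>dom K. sat K (e(wv:=w)) (bexs ys wv \<alpha>)"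
proof (induction ys arbitrary: e)
  case Nil
  have "sat K (e(wv:=zer K)) \<alpha>" using Nil.prems(4) by (simp only: exs.simps sat_upd_irrel[OF Nil.prems(2)])
  then show ?case using pa_basic(1)[OF assms(1)] by (simp only: bexs.simps) blast
next
  case (Cons y ys)
  have yw: "y \<noteq> wv" and ys: "wv \<notin> set ys" using Cons.prems(1) by auto
  obtain a where a: "a \<in> dom K" "sat K (e(y:=a)) (exs ys \<alpha>)" using Cons.prems(4)
    by (simp only: exs.simps sat.simps) blast
  obtain w where w: "w \<in> dom K" "sat K ((e(y:=a))(wv:=w)) (bexs ys wv \<alpha>)"
    using Cons.IH[OF ys Cons.prems(2) env_upd[OF Cons.prems(3) a(1)] a(2)] by blast
  define w' where "w' = pls K (pls K w a) (one K)"
  have w'D: "w' \<in> dom K" unfolding w'_def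
    using pa_basic(3)[OF assms(1)] pa_basic(2)[OF assms(1)] w(1) a(1) by blast
  have ww: "lss K w w'" "lss K a w'" unfolding w'_def
    using pa_le_add[OF assms(1) w(1) a(1)] pa_le_add2[OF assms(1) w(1) a(1)] by auto
  have "sat K ((e(y:=a))(wv:=w')) (bexs ys wv \<alpha>)"
    using bexs_mono[OF assms(1) w(1) w'D ww(1) ys Cons.prems(2) w(2)] .
  then have "sat K (e(wv:=w')) (bexs (y#ys) wv \<alpha>)" unfolding sat_bexs_Cons[OF yw] using a(1) ww(2) by blast
  then show ?case using w'D by blast
qed

lemma coll_K:
  assumes "BSigma k K" "sigma k \<psi>" "x \<noteq> y" "env K e" "a \<in> dom K"
    "\<forall>u\<in>dom K. lss K u a \<longrightarrow> (\<exists>v\<in>dom K. sat K (e(x := u, y := v)) \<psi>)"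
  shows "\<exists>b\<in>dom K. \<forall>u\<in>dom K. lss K u a \<longrightarrow> (\<exists>v\<in>dom K. lss K v b \<and> sat K (e(x := u, y := v)) \<psi>)"
proof -
  have H: "\<forall>\<phi> x y e. sigma k \<phi> \<longrightarrow> x \<noteq> y \<longrightarrow> env K e \<longrightarrow>
        (\<forall>a\<in>dom K.
          (\<forall>u\<in>dom K. lss K u a \<longrightarrow> (\<exists>v\<in>dom K. sat K (e(x := u, y := v)) \<phi>)) \<longrightarrow>
          (\<exists>b\<in>dom K. \<forall>u\<in>dom K. lss K u a \<longrightarrow>
              (\<exists>v\<in>dom K. lss K v b \<and> sat K (e(x := u, y := v)) \<phi>)))"
    using assms(1) unfolding BSigma_def by (rule conjunct2)
  show ?thesis using H[rule_format, of \<psi> x y e a] assms(2-6) by blast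
qed

lemma pi_of:
  assumes NFm: "\<And>\<phi>. bS m \<phi> \<Longrightarrow> \<exists>\<psi>. sigma m \<psi> \<and> eqK K \<phi> \<psi>"
    and "bS m (fdual \<chi>)"
  shows "\<exists>\<gamma>. pi m \<gamma> \<and> eqK K \<chi> \<gamma>"
proof -
  obtain \<delta> where d: "sigma m \<delta>" "eqK K (fdual \<chi>) \<delta>" using NFm[OF assms(2)] by blast
  have "pi m (fdual \<delta>)" using sigma_fdual[OF d(1)] .
  moreover have "eqK K \<chi> (fdual \<delta>)" using d(2) unfolding eqK_def sat_fdual by blast
  ultimately show ?thesis by blast
qed

lemma two_renamed:
  assumes "sigma (Suc m) A" "sigma (Suc m) B"
  shows "\<exists>xs1 \<alpha>1 ys1 \<beta>1. pi m \<alpha>1 \<and> pi m \<beta>1 \<and> set xs1 \<inter> fv (exs ys1 \<beta>1) = {} \<and> set ys1 \<inter> fv \<alpha>1 = {}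
     \<and> (\<forall>(M::'a struc) e. sat M e A = sat M e (exs xs1 \<alpha>1)) \<and> (\<forall>(M::'a struc) e. sat M e B = sat M e (exs ys1 \<beta>1))"
proof -
  obtain xs \<alpha> where xa: "pi m \<alpha>" "A = exs xs \<alpha>" using sigma_decomp[OF assms(1)] by blast
  obtain ys \<beta> where yb: "pi m \<beta>" "B = exs ys \<beta>" using sigma_decomp[OF assms(2)] by blast
  obtain f where f: "inj f" "\<forall>(M::'a struc) e. sat M e (rn f A) = sat M e A" "fv (rn f A) = fv A"
      "\<forall>i. i \<notin> fv A \<longrightarrow> f i \<notin> fv B"
    using rename_away[OF finite_fv[of B], of A] by blast
  define xs1 where "xs1 = map f xs"
  define \<alpha>1 where "\<alpha>1 = rn f \<alpha>"
  have A1: "rn f A = exs xs1 \<alpha>1" by (simp add: xa(2) rn_exs xs1_def \<alpha>1_def)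
  have pa: "pi m \<alpha>1" using sp_rn[OF f(1)] xa(1) \<alpha>1_def by blast
  have dx: "set xs1 \<inter> fv B = {}"
  proof -
    have "\<And>x. x \<in> set xs \<Longrightarrow> x \<notin> fv A" using set_exs_fv[of xs \<alpha>] xa(2) by blast
    then show ?thesis using f(4) by (auto simp: xs1_def)
  qed
  obtain g where g: "inj g" "\<forall>(M::'a struc) e. sat M e (rn g B) = sat M e B" "fv (rn g B) = fv B"
      "\<forall>i. i \<notin> fv B \<longrightarrow> g i \<notin> fv \<alpha>1"
    using rename_away[OF finite_fv[of \<alpha>1], of B] by blast
  define ys1 where "ys1 = map g ys"
  define \<beta>1 where "\<beta>1 = rn g \<beta>"
  have B1: "rn g B = exs ys1 \<beta>1" by (simp add: yb(2) rn_exs ys1_def \<beta>1_def)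
  have pb: "pi m \<beta>1" using sp_rn[OF g(1)] yb(1) \<beta>1_def by blast
  have dy: "set ys1 \<inter> fv \<alpha>1 = {}"
  proof -
    have "\<And>x. x \<in> set ys \<Longrightarrow> x \<notin> fv B" using set_exs_fv[of ys \<beta>] yb(2) by blast
    then show ?thesis using g(4) by (auto simp: ys1_def)
  qed
  have "set xs1 \<inter> fv (exs ys1 \<beta>1) = {}" using dx g(3) B1 by simp
  moreover have "\<forall>(M::'a struc) e. sat M e A = sat M e (exs xs1 \<alpha>1)" using f(2) A1 by metis
  moreover have "\<forall>(M::'a struc) e. sat M e B = sat M e (exs ys1 \<beta>1)" using g(2) B1 by metis
  ultimately show ?thesis using pa pb dy by blast
qed

lemma conj_step:
  assumes NFm: "\<And>\<phi>. bS m \<phi> \<Longrightarrow> \<exists>\<psi>. sigma m \<psi> \<and> eqK K \<phi> \<psi>"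
    and "sigma (Suc m) A" "sigma (Suc m) B"
  shows "\<exists>C. sigma (Suc m) C \<and> eqK (K::'a struc) (Conj A B) C"
proof -
  obtain xs1 \<alpha>1 ys1 \<beta>1 where R: "pi m \<alpha>1" "pi m \<beta>1" "set xs1 \<inter> fv (exs ys1 \<beta>1) = {}"
     "set ys1 \<inter> fv \<alpha>1 = {}" "\<forall>(M::'a struc) e. sat M e A = sat M e (exs xs1 \<alpha>1)"
     "\<forall>(M::'a struc) e. sat M e B = sat M e (exs ys1 \<beta>1)"
    using two_renamed[OF assms(2,3)] by blast
  have "bS m (fdual (Conj \<alpha>1 \<beta>1))"
    using R(1,2) by (simp, intro bS_disj bS_conj bS_base pi_fdual)
  then obtain \<gamma> where G: "pi m \<gamma>" "eqK K (Conj \<alpha>1 \<beta>1) \<gamma>" using pi_of[OF NFm] by blast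
  have e1: "eqK K (Conj A B) (exs xs1 (Conj \<alpha>1 (exs ys1 \<beta>1)))"
  proof (rule eqK_univ)
    fix e
    have "sat K e (Conj A B) = sat K e (Conj (exs xs1 \<alpha>1) (exs ys1 \<beta>1))" using R(5,6) by simp
    also have "\<dots> = sat K e (exs xs1 (Conj \<alpha>1 (exs ys1 \<beta>1)))" by (rule pull_conj_l[OF R(3)])
    finally show "sat K e (Conj A B) = sat K e (exs xs1 (Conj \<alpha>1 (exs ys1 \<beta>1)))" .
  qed
  have e2: "eqK K (Conj \<alpha>1 (exs ys1 \<beta>1)) (exs ys1 (Conj \<alpha>1 \<beta>1))"
    by (rule eqK_univ, rule pull_conj_r[OF R(4)])
  have "eqK K (Conj A B) (exs (xs1 @ ys1) \<gamma>)"
    unfolding exs_append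
    by (rule eqK_trans[OF e1 eqK_exs[OF eqK_trans[OF e2 eqK_exs[OF G(2)]]]])
  moreover have "sigma (Suc m) (exs (xs1 @ ys1) \<gamma>)" using sigma_exs[OF G(1)] .
  ultimately show ?thesis by blast
qed

lemma disj_step:
  assumes NFm: "\<And>\<phi>. bS m \<phi> \<Longrightarrow> \<exists>\<psi>. sigma m \<psi> \<and> eqK K \<phi> \<psi>"
    and "sigma (Suc m) A" "sigma (Suc m) B" and ne: "dom (K::'a struc) \<noteq> {}"
  shows "\<exists>C. sigma (Suc m) C \<and> eqK K (Disj A B) C"
proof -
  obtain xs1 \<alpha>1 ys1 \<beta>1 where R: "pi m \<alpha>1" "pi m \<beta>1" "set xs1 \<inter> fv (exs ys1 \<beta>1) = {}"
     "set ys1 \<inter> fv \<alpha>1 = {}" "\<forall>(M::'a struc) e. sat M e A = sat M e (exs xs1 \<alpha>1)"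
     "\<forall>(M::'a struc) e. sat M e B = sat M e (exs ys1 \<beta>1)"
    using two_renamed[OF assms(2,3)] by blast
  have "bS m (fdual (Disj \<alpha>1 \<beta>1))"
    using R(1,2) by (simp, intro bS_disj bS_conj bS_base pi_fdual)
  then obtain \<gamma> where G: "pi m \<gamma>" "eqK K (Disj \<alpha>1 \<beta>1) \<gamma>" using pi_of[OF NFm] by blast
  have e1: "eqK K (Disj A B) (exs xs1 (Disj \<alpha>1 (exs ys1 \<beta>1)))"
  proof (rule eqK_univ)
    fix e
    have "sat K e (Disj A B) = sat K e (Disj (exs xs1 \<alpha>1) (exs ys1 \<beta>1))" using R(5,6) by simp
    also have "\<dots> = sat K e (exs xs1 (Disj \<alpha>1 (exs ys1 \<beta>1)))" by (rule pull_disj_l[OF R(3) ne])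
    finally show "sat K e (Disj A B) = sat K e (exs xs1 (Disj \<alpha>1 (exs ys1 \<beta>1)))" .
  qed
  have e2: "eqK K (Disj \<alpha>1 (exs ys1 \<beta>1)) (exs ys1 (Disj \<alpha>1 \<beta>1))"
    by (rule eqK_univ, rule pull_disj_r[OF R(4) ne])
  have "eqK K (Disj A B) (exs (xs1 @ ys1) \<gamma>)"
    unfolding exs_append
    by (rule eqK_trans[OF e1 eqK_exs[OF eqK_trans[OF e2 eqK_exs[OF G(2)]]]])
  moreover have "sigma (Suc m) (exs (xs1 @ ys1) \<gamma>)" using sigma_exs[OF G(1)] .
  ultimately show ?thesis by blast
qed

lemma fresh_var: "finite (S::nat set) \<Longrightarrow> \<exists>wv. wv \<notin> S"
  using ex_new_if_finite[OF infinite_UNIV_nat] by blast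

lemma ball_step:
  assumes NFm: "\<And>\<phi>. bS m \<phi> \<Longrightarrow> \<exists>\<psi>. sigma m \<psi> \<and> eqK K \<phi> \<psi>"
    and PA: "PAminus K" and BS: "BSigma (Suc n) K" and mn: "m \<le> n"
    and A: "sigma (Suc m) A" and xv: "x \<noteq> v"
  shows "\<exists>C. sigma (Suc m) C \<and> eqK K (BAll x (Var v) A) C"
proof -
  obtain ys \<alpha> where ya: "pi m \<alpha>" "A = exs ys \<alpha>" using sigma_decomp[OF A] by blast
  have "\<exists>wv. wv \<notin> fv \<alpha> \<union> set ys \<union> {x, v}"
    by (rule fresh_var, intro finite_UnI finite_fv finite_set finite.intros)
  then obtain wv where wv: "wv \<notin> fv \<alpha> \<union> set ys \<union> {x, v}" by blast
  then have wv1: "wv \<notin> fv \<alpha>" "wv \<notin> set ys" "wv \<noteq> x" "wv \<noteq> v" by auto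
  define \<psi>0 where "\<psi>0 = bexs ys wv \<alpha>"
  have "bS m (fdual \<psi>0)" unfolding \<psi>0_def fdual_bexs
    by (rule bS_balls[OF bS_base[OF pi_fdual[OF ya(1)]] wv1(2)])
  then obtain \<gamma>0 where G0: "pi m \<gamma>0" "eqK K \<psi>0 \<gamma>0" using pi_of[OF NFm] by blast
  define \<psi>1 where "\<psi>1 = BAll x (Var v) \<psi>0"
  have "bS m (fdual \<psi>1)" unfolding \<psi>1_def fdual_BAll \<psi>0_def fdual_bexs
    by (rule bS_bex[OF bS_balls[OF bS_base[OF pi_fdual[OF ya(1)]] wv1(2)] xv])
  then obtain \<gamma>1 where G1: "pi m \<gamma>1" "eqK K \<psi>1 \<gamma>1" using pi_of[OF NFm] by blast
  have sC: "sigma (Suc m) (Ex wv \<gamma>1)" using G1(1) by (intro sigma_pi.intros)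
  have s0: "sigma (Suc n) \<gamma>0" using sigma_mono[OF sigma_pi.intros(3)[OF G0(1)]] mn by simp
  have sat1: "sat K E \<psi>1 = (\<forall>u\<in>dom K. lss K u (E v) \<longrightarrow> sat K (E(x:=u)) \<psi>0)" for E
    unfolding \<psi>1_def sat_BAll using xv by simp
  have "sat K e (BAll x (Var v) A) = sat K e (Ex wv \<gamma>1)" if e: "env K e" for e
  proof
    assume H: "sat K e (BAll x (Var v) A)"
    have H': "\<forall>u\<in>dom K. lss K u (e v) \<longrightarrow> sat K (e(x:=u)) (exs ys \<alpha>)"
      using H xv unfolding sat_BAll ya(2) by simp
    have "\<forall>u\<in>dom K. lss K u (e v) \<longrightarrow> (\<exists>w\<in>dom K. sat K (e(x := u, wv := w)) \<gamma>0)"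
    proof (intro ballI impI)
      fix u assume u: "u \<in> dom K" "lss K u (e v)"
      have eu: "env K (e(x:=u))" using env_upd[OF e u(1)] .
      obtain w where w: "w \<in> dom K" "sat K (e(x:=u,wv:=w)) \<psi>0"
        using exs_bexs[OF PA wv1(2,1) eu] H' u unfolding \<psi>0_def by blast
      have "sat K (e(x:=u,wv:=w)) \<gamma>0" using G0(2) w env_upd[OF eu w(1)] unfolding eqK_def by blast
      then show "\<exists>w\<in>dom K. sat K (e(x := u, wv := w)) \<gamma>0" using w(1) by blast
    qed
    moreover have "e v \<in> dom K" using e by (simp add: env_def)
    ultimately obtain b where b: "b \<in> dom K"
      "\<forall>u\<in>dom K. lss K u (e v) \<longrightarrow> (\<exists>w\<in>dom K. lss K w b \<and> sat K (e(x := u, wv := w)) \<gamma>0)"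
      using coll_K[OF BS s0 wv1(3)[symmetric] e] by blast
    have "sat K (e(wv:=b)) \<psi>1"
      unfolding sat1
    proof (intro ballI impI)
      fix u assume u: "u \<in> dom K" "lss K u ((e(wv := b)) v)"
      then have uv: "lss K u (e v)" using wv1(4) by simp
      obtain w where w: "w \<in> dom K" "lss K w b" "sat K (e(x := u, wv := w)) \<gamma>0"
        using b(2) u(1) uv by blast
      have eu: "env K (e(x:=u, wv:=w))" using env_upd[OF env_upd[OF e u(1)] w(1)] .
      have "sat K (e(x := u, wv := w)) \<psi>0" using G0(2) w(3) eu unfolding eqK_def by blast
      then have "sat K (e(x := u, wv := b)) \<psi>0"
        unfolding \<psi>0_def using bexs_mono[OF PA w(1) b(1) w(2) wv1(2,1)] by blast
      moreover have "e(x := u, wv := b) = (e(wv := b))(x := u)" using wv1(3) by (simp add: fun_upd_twist)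
      ultimately show "sat K ((e(wv := b))(x := u)) \<psi>0" by simp
    qed
    then have "sat K (e(wv:=b)) \<gamma>1" using G1(2) env_upd[OF e b(1)] unfolding eqK_def by blast
    then show "sat K e (Ex wv \<gamma>1)" using b(1) by auto
  next
    assume "sat K e (Ex wv \<gamma>1)"
    then obtain w where w: "w \<in> dom K" "sat K (e(wv:=w)) \<gamma>1" by auto
    then have "sat K (e(wv:=w)) \<psi>1" using G1(2) env_upd[OF e w(1)] unfolding eqK_def by blast
    then have S: "\<forall>u\<in>dom K. lss K u (e v) \<longrightarrow> sat K ((e(wv:=w))(x:=u)) \<psi>0"
      unfolding sat1 using wv1(4) by simp
    have "\<forall>u\<in>dom K. lss K u (e v) \<longrightarrow> sat K (e(x:=u)) (exs ys \<alpha>)"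
    proof (intro ballI impI)
      fix u assume u: "u \<in> dom K" "lss K u (e v)"
      have "sat K ((e(x:=u))(wv:=w)) \<psi>0" using S u wv1(3) by (simp add: fun_upd_twist)
      then show "sat K (e(x:=u)) (exs ys \<alpha>)" unfolding \<psi>0_def by (rule bexs_exs[OF wv1(2,1)])
    qed
    then show "sat K e (BAll x (Var v) A)" unfolding sat_BAll ya(2) using xv by simp
  qed
  then have "eqK K (BAll x (Var v) A) (Ex wv \<gamma>1)" unfolding eqK_def by blast
  then show ?thesis using sC by blast
qed

lemma NF:
  assumes PA: "PAminus K" and BS: "BSigma (Suc n) K"
  shows "m \<le> Suc n \<Longrightarrow> bS m \<phi> \<Longrightarrow> \<exists>\<psi>. sigma m \<psi> \<and> eqK K \<phi> \<psi>"
proof (induction m arbitrary: \<phi>)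
  case 0
  then have "delta0 \<phi>" using bS0 by blast
  then show ?case using eqK_refl by (blast intro: sigma_pi.intros)
next
  case (Suc m)
  have NFm: "\<And>\<phi>. bS m \<phi> \<Longrightarrow> \<exists>\<psi>. sigma m \<psi> \<and> eqK K \<phi> \<psi>" using Suc.IH Suc.prems(1) by simp
  have mn: "m \<le> n" using Suc.prems(1) by simp
  have ne: "dom K \<noteq> {}" using pa_basic(1)[OF PA] by blast
  have "bS k \<phi> \<Longrightarrow> k = Suc m \<Longrightarrow> \<exists>\<psi>. sigma (Suc m) \<psi> \<and> eqK K \<phi> \<psi>" for k \<phi>
  proof (induction rule: bS.induct)
    case (bS_base k \<phi>)
    then show ?case using eqK_refl by blast
  next
    case (bS_conj k a b)
    then obtain a' b' where "sigma (Suc m) a'" "eqK K a a'" "sigma (Suc m) b'" "eqK K b b'" by blast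
    then show ?case using conj_step[OF NFm] eqK_Conj eqK_trans by metis
  next
    case (bS_disj k a b)
    then obtain a' b' where "sigma (Suc m) a'" "eqK K a a'" "sigma (Suc m) b'" "eqK K b b'" by blast
    then show ?case using disj_step[OF NFm _ _ ne] eqK_Disj eqK_trans by metis
  next
    case (bS_ex k a x)
    then obtain a' where "sigma (Suc m) a'" "eqK K a a'" by blast
    then show ?case using eqK_Ex sigma_pi.intros(4) by blast
  next
    case (bS_bex k a x v)
    then obtain a' where a': "sigma (Suc m) a'" "eqK K a a'" by blast
    have "sigma (Suc m) (Lt (Var x) (Var v))" using delta0_sp delta0.intros(2) by blast
    then obtain C where C: "sigma (Suc m) C" "eqK K (Conj (Lt (Var x) (Var v)) a') C"
      using conj_step[OF NFm _ a'(1)] by blast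
    have "eqK K (BEx x (Var v) a) (Ex x C)" unfolding BEx_def
      by (rule eqK_Ex, rule eqK_trans[OF eqK_Conj[OF eqK_refl a'(2)] C(2)])
    then show ?case using C(1) sigma_pi.intros(4) by blast
  next
    case (bS_ball k a x v)
    then obtain a' where a': "sigma (Suc m) a'" "eqK K a a'" by blast
    obtain C where "sigma (Suc m) C" "eqK K (BAll x (Var v) a') C"
      using ball_step[OF NFm PA BS mn a'(1) bS_ball.hyps(2)] by blast
    then show ?case using eqK_BAll[OF a'(2)] eqK_trans by blast
  qed
  then show ?case using Suc.prems(2) by blast
qed

theorem proposition1p3:
  fixes n :: nat and M K :: "'a struc"
  assumes "IDelta0 M"
    and "BSigma (Suc n) K"
    and "sigma_elementary (Suc (Suc n)) M K"
    and "end_extension M K"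
    and "proper_extension M K"
  shows "\<forall>a\<in>dom M. \<forall>\<phi> x y e. pi (Suc n) \<phi> \<longrightarrow> x \<noteq> y \<longrightarrow> env M e \<longrightarrow>
     ((\<forall>u\<in>dom M. \<exists>v\<in>dom M. lss M v a \<and> sat M (e(x := u, y := v)) \<phi>) \<longrightarrow>
      (\<exists>v\<in>dom M. lss M v a \<and>
         (\<forall>b\<in>dom M. \<exists>u\<in>dom M. lss M b u \<and> sat M (e(x := u, y := v)) \<phi>)))"
proof (intro ballI allI impI)
  fix a \<phi> x y e
  assume a: "a \<in> dom M" and p\<phi>: "pi (Suc n) \<phi>" and xy: "x \<noteq> y" and eM: "env M e"
    and H: "\<forall>u\<in>dom M. \<exists>v\<in>dom M. lss M v a \<and> sat M (e(x := u, y := v)) \<phi>"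
  note BS = assms(2)
  have PAK: "PAminus K" using BS unfolding BSigma_def IDelta0_def by blast
  have sub: "substructure M K" using assms(3) unfolding sigma_elementary_def by blast
  have el: "\<And>\<psi> e. sigma (Suc (Suc n)) \<psi> \<Longrightarrow> env M e \<Longrightarrow> sat M e \<psi> = sat K e \<psi>"
    using assms(3) unfolding sigma_elementary_def by blast
  have domMK: "dom M \<subseteq> dom K" using sub unfolding substructure_def by blast
  have lssMK: "\<And>u v. u \<in> dom M \<Longrightarrow> v \<in> dom M \<Longrightarrow> lss M u v = lss K u v"
    using sub unfolding substructure_def by blast
  have envMK: "\<And>e. env M e \<Longrightarrow> env K e" using domMK unfolding env_def by blast
  have endx: "\<And>c b. c \<in> dom K \<Longrightarrow> c \<notin> dom M \<Longrightarrow> b \<in> dom M \<Longrightarrow> lss K b c"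
    using assms(4) unfolding end_extension_def by blast
  obtain c where c: "c \<in> dom K" "c \<notin> dom M"
    using assms(5) domMK unfolding proper_extension_def by blast
  have aK: "a \<in> dom K" using a domMK by blast
  have s\<phi>: "sigma (Suc (Suc n)) \<phi>" using sigma_pi.intros(3)[OF p\<phi>] .
  have NFn: "\<And>\<chi>. bS (Suc n) \<chi> \<Longrightarrow> \<exists>\<psi>. sigma (Suc n) \<psi> \<and> eqK K \<chi> \<psi>"
    using NF[OF PAK BS] by blast
  have "\<exists>av. av \<notin> fv \<phi> \<union> {x, y}"
    by (rule fresh_var, intro finite_UnI finite_fv finite.intros)
  then obtain av where av: "av \<notin> fv \<phi>" "av \<noteq> x" "av \<noteq> y" by blast
  define e' where "e' = e(av := a)"
  have e'M: "env M e'" using env_upd[OF eM a] unfolding e'_def .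
  define \<Phi> where "\<Phi> = BAll y (Var av) (fdual \<phi>)"
  have "bS (Suc n) \<Phi>" unfolding \<Phi>_def
    using bS_ball[OF bS_base[OF pi_fdual[OF p\<phi>]]] av(3) by metis
  then obtain S0 where S0: "sigma (Suc n) S0" "eqK K \<Phi> S0" using NFn by blast
  have sS0: "sigma (Suc (Suc n)) S0" using sigma_mono[OF S0(1)] by simp
  have e'upd: "e'(x := u, y := v) = (e(x := u, y := v))(av := a)" for u v
    unfolding e'_def using av by (simp add: fun_upd_twist)
  have sat\<Phi>: "sat K (e'(x:=u)) \<Phi> = (\<forall>v\<in>dom K. lss K v a \<longrightarrow> \<not> sat K (e(x := u, y := v)) \<phi>)" for u
  proof -
    have "sat K (e'(x:=u)) \<Phi> = (\<forall>v\<in>dom K. lss K v a \<longrightarrow> \<not> sat K (e'(x := u, y := v)) \<phi>)"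
      unfolding \<Phi>_def sat_BAll sat_fdual using av by (simp add: e'_def)
    also have "\<dots> = (\<forall>v\<in>dom K. lss K v a \<longrightarrow> \<not> sat K (e(x := u, y := v)) \<phi>)"
      unfolding e'upd sat_upd_irrel[OF av(1)] ..
    finally show ?thesis .
  qed
  have "\<exists>v\<in>dom K. lss K v a \<and> sat K (e(x:=c, y:=v)) \<phi>"
  proof (rule ccontr)
    assume N: "\<not> ?thesis"
    have "sat K (e'(x:=c)) \<Phi>" unfolding sat\<Phi> using N by blast
    then have "sat K (e'(x:=c)) S0" using S0(2) env_upd[OF envMK[OF e'M] c(1)] unfolding eqK_def by blast
    then have "sat K e' (Ex x S0)" using c(1) by auto
    moreover have "sigma (Suc (Suc n)) (Ex x S0)"
      using sigma_mono[OF sigma_pi.intros(4)[OF S0(1)]] by simp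
    ultimately have "sat M e' (Ex x S0)" using el e'M by blast
    then obtain u where u: "u \<in> dom M" "sat M (e'(x:=u)) S0" by auto
    have euM: "env M (e'(x:=u))" using env_upd[OF e'M u(1)] .
    have "sat K (e'(x:=u)) S0" using el[OF sS0 euM] u(2) by blast
    then have "sat K (e'(x:=u)) \<Phi>" using S0(2) envMK[OF euM] unfolding eqK_def by blast
    then have P: "\<forall>v\<in>dom K. lss K v a \<longrightarrow> \<not> sat K (e(x := u, y := v)) \<phi>" unfolding sat\<Phi> .
    obtain v where v: "v \<in> dom M" "lss M v a" "sat M (e(x := u, y := v)) \<phi>" using H u(1) by blast
    have evM: "env M (e(x := u, y := v))" using env_upd[OF env_upd[OF eM u(1)] v(1)] .
    have "sat K (e(x := u, y := v)) \<phi>" using el[OF s\<phi> evM] v(3) by blast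
    moreover have "lss K v a" using lssMK[OF v(1) a] v(2) by blast
    ultimately show False using P v(1) domMK by blast
  qed
  then obtain v where v: "v \<in> dom K" "lss K v a" "sat K (e(x:=c, y:=v)) \<phi>" by blast
  have vM: "v \<in> dom M"
  proof (rule ccontr)
    assume "v \<notin> dom M"
    then have "lss K a v" using endx[OF v(1) _ a] by blast
    then have "lss K v v" using pa_basic(5)[OF PAK v(1) aK v(1) v(2)] by blast
    then show False using pa_basic(4)[OF PAK v(1)] by blast
  qed
  have vaM: "lss M v a" using lssMK[OF vM a] v(2) by blast
  have "\<forall>b\<in>dom M. \<exists>u\<in>dom M. lss M b u \<and> sat M (e(x := u, y := v)) \<phi>"
  proof
    fix b assume b: "b \<in> dom M"
    have "\<exists>bv. bv \<notin> fv \<phi> \<union> {x, y}"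
      by (rule fresh_var, intro finite_UnI finite_fv finite.intros)
    then obtain bv where bv: "bv \<notin> fv \<phi>" "bv \<noteq> x" "bv \<noteq> y" by blast
    define \<Psi> where "\<Psi> = Conj (Lt (Var bv) (Var x)) \<phi>"
    have "bS (Suc n) (fdual \<Psi>)" unfolding \<Psi>_def
      by (simp, intro bS_disj bS_base pi_fdual p\<phi>,
          rule conjunct1[OF delta0_sp], intro delta0.intros)
    then obtain \<gamma> where G: "pi (Suc n) \<gamma>" "eqK K \<Psi> \<gamma>" using pi_of[OF NFn] by blast
    define E where "E = e(y := v, bv := b)"
    have EM: "env M E" unfolding E_def using env_upd[OF env_upd[OF eM vM] b] .
    have Eupd: "E(x := u) = (e(x := u, y := v))(bv := b)" for u
      unfolding E_def using bv xy by (auto simp: fun_eq_iff)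
    have sat\<Psi>: "sat K (E(x := u)) \<Psi> = (lss K b u \<and> sat K (e(x := u, y := v)) \<phi>)" for u
      unfolding \<Psi>_def Eupd using bv xy by (simp add: sat_upd_irrel)
    have "sat K (E(x := c)) \<Psi>" unfolding sat\<Psi> using endx[OF c b] v(3) by blast
    then have "sat K (E(x := c)) \<gamma>" using G(2) env_upd[OF envMK[OF EM] c(1)] unfolding eqK_def by blast
    then have "sat K E (Ex x \<gamma>)" using c(1) by auto
    moreover have s\<gamma>: "sigma (Suc (Suc n)) \<gamma>" using sigma_pi.intros(3)[OF G(1)] .
    ultimately have "sat M E (Ex x \<gamma>)" using el[OF sigma_pi.intros(4)[OF s\<gamma>] EM] by blast
    then obtain u where u: "u \<in> dom M" "sat M (E(x:=u)) \<gamma>" by auto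
    have euM: "env M (E(x:=u))" using env_upd[OF EM u(1)] .
    have "sat K (E(x:=u)) \<gamma>" using el[OF s\<gamma> euM] u(2) by blast
    then have "sat K (E(x:=u)) \<Psi>" using G(2) envMK[OF euM] unfolding eqK_def by blast
    then have bu: "lss K b u" and su: "sat K (e(x := u, y := v)) \<phi>" unfolding sat\<Psi> by blast+
    have evM: "env M (e(x := u, y := v))" using env_upd[OF env_upd[OF eM u(1)] vM] .
    have "sat M (e(x := u, y := v)) \<phi>" using el[OF s\<phi> evM] su by blast
    moreover have "lss M b u" using lssMK[OF b u(1)] bu by blast
    ultimately show "\<exists>u\<in>dom M. lss M b u \<and> sat M (e(x := u, y := v)) \<phi>" using u(1) by blast
  qed
  then show "\<exists>v\<in>dom M. lss M v a \<and>
         (\<forall>b\<in>dom M. \<exists>u\<in>dom M. lss M b u \<and> sat M (e(x := u, y := v)) \<phi>)" using vM vaM by blast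
qed

end
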